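(* Let $\mathcal{L}_{\rm F}$ be the Fibonacci language and let ${\rm S}:\mathcal{L}_{\rm F}\to\mathbb{N}$ be a homomorphism. If ${\rm S}(0)=1$ and ${\rm S}(1)\le3$, or if ${\rm S}(0)=2$ and ${\rm S}(1)=1$, then ${\rm S}(\mathcal{L}_{\rm F})=\mathbb{N}$.
   Context: $\mathbb{N}=\{1,2,3,\dots\}$ and $[x]$ denotes the integer part (floor) of $x$. Let $\Phi=(1+\sqrt5)/2$ and $\alpha=2-\Phi$. The characteristic word $c_\alpha=(c_\alpha(n))_{n\ge0}$ is the infinite word over $\{0,1\}$ with $c_\alpha(n)=[(n+2)\alpha]-[(n+1)\alpha]$ (the infinite Fibonacci word). The Fibonacci language $\mathcal{L}_{\rm F}$ is the set of all nonempty finite words occurring as factors of $c_\alpha$. A homomorphism ${\rm S}:\mathcal{L}_{\rm F}\to\mathbb{N}$ is a map with ${\rm S}(w_1\cdots w_n)={\rm S}(w_1)+\cdots+{\rm S}(w_n)$, determined by ${\rm S}(0),{\rm S}(1)\in\mathbb{N}$. *)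

theory Defs
  imports Complex_Main
begin

definition Phi :: real where "Phi = (1 + sqrt 5) / 2"

definition alpha :: real where "alpha = 2 - Phi"

definition c_alpha :: "nat \<Rightarrow> int" where
  "c_alpha n = \<lfloor>(real n + 2) * alpha\<rfloor> - \<lfloor>(real n + 1) * alpha\<rfloor>"

definition fib_lang :: "int list set" where
  "fib_lang = {map c_alpha [i..<i + m] | i m. m \<ge> 1}"

definition hom_S :: "nat \<Rightarrow> nat \<Rightarrow> int list \<Rightarrow> nat" where
  "hom_S s0 s1 w = sum_list (map (\<lambda>x. if x = 0 then s0 else s1) w)"

end

theory Submission
  imports Defs
begin

lemma alpha_bounds: "1/3 < alpha \<and> alpha < 2/5"
proof -
  have a: "sqrt 5 < 9/4"
    by (rule real_less_lsqrt) (auto simp: power2_eq_square)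
  have b: "11/5 < sqrt 5"
    by (rule real_less_rsqrt) (simp add: power2_eq_square)
  show ?thesis using a b unfolding alpha_def Phi_def by auto
qed

lemma fl01:
  fixes x d :: real
  assumes "0 \<le> d" "d < 1"
  shows "\<lfloor>x + d\<rfloor> = \<lfloor>x\<rfloor> \<or> \<lfloor>x + d\<rfloor> = \<lfloor>x\<rfloor> + 1"
proof -
  have "\<lfloor>x\<rfloor> \<le> \<lfloor>x + d\<rfloor>" using assms by (intro floor_mono) auto
  moreover have "\<lfloor>x + d\<rfloor> \<le> \<lfloor>x\<rfloor> + 1"
    using assms floor_correct[of x] by (simp add: floor_le_iff) linarith
  ultimately show ?thesis by linarith
qed

lemma c01: "c_alpha n = 0 \<or> c_alpha n = 1"
proof -
  have "(real n + 2) * alpha = (real n + 1) * alpha + alpha" by (simp add: algebra_simps)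
  then show ?thesis unfolding c_alpha_def using fl01[of alpha "(real n + 1) * alpha"] alpha_bounds
    by auto
qed

lemma no11: "c_alpha n = 1 \<Longrightarrow> c_alpha (Suc n) = 0"
proof -
  assume h: "c_alpha n = 1"
  have e: "(real (Suc n) + 2) * alpha = (real n + 1) * alpha + 2 * alpha"
    "real (Suc n) + 1 = real n + 2" by (simp_all add: algebra_simps)
  have "\<lfloor>(real n + 1) * alpha + 2 * alpha\<rfloor> = \<lfloor>(real n + 1) * alpha\<rfloor> \<or>
        \<lfloor>(real n + 1) * alpha + 2 * alpha\<rfloor> = \<lfloor>(real n + 1) * alpha\<rfloor> + 1"
    using fl01[of "2*alpha" "(real n + 1) * alpha"] alpha_bounds by auto
  then show ?thesis using h c01[of "Suc n"] unfolding c_alpha_def e by auto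
qed

lemma cvals: "c_alpha 0 = 0" "c_alpha 1 = 1" "c_alpha 2 = 0" "c_alpha 3 = 0"
proof -
  have b: "1/3 < alpha" "alpha < 2/5" using alpha_bounds by auto
  have f1: "\<lfloor>alpha\<rfloor> = 0" using b by (simp add: floor_eq_iff)
  have f2: "\<lfloor>2 * alpha\<rfloor> = 0" using b by (simp add: floor_eq_iff)
  have f3: "\<lfloor>3 * alpha\<rfloor> = 1" using b by (simp add: floor_eq_iff)
  have f4: "\<lfloor>4 * alpha\<rfloor> = 1" using b by (simp add: floor_eq_iff)
  have f5: "\<lfloor>5 * alpha\<rfloor> = 1" using b by (simp add: floor_eq_iff)
  show "c_alpha 0 = 0" "c_alpha 1 = 1" "c_alpha 2 = 0" "c_alpha 3 = 0"
    unfolding c_alpha_def using f1 f2 f3 f4 f5 by (simp_all add: numeral_eq_Suc)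
qed

definition G :: "nat \<Rightarrow> nat \<Rightarrow> nat \<Rightarrow> nat" where
  "G s0 s1 t = hom_S s0 s1 (map c_alpha [0..<t])"

lemma G0: "G s0 s1 0 = 0" by (simp add: G_def hom_S_def)

lemma GSuc: "G s0 s1 (Suc t) = G s0 s1 t + (if c_alpha t = 0 then s0 else s1)"
  by (simp add: G_def hom_S_def)

lemma window: "i \<le> j \<Longrightarrow> hom_S s0 s1 (map c_alpha [i..<j]) + G s0 s1 i = G s0 s1 j"
proof -
  assume "i \<le> j"
  then have "[0..<j] = [0..<i] @ [i..<j]"
    using upt_add_eq_append[of 0 i "j - i"] by simp
  then show ?thesis by (simp add: G_def hom_S_def)
qed

lemma mem: "i < j \<Longrightarrow> G s0 s1 j = G s0 s1 i + n \<Longrightarrow> n \<in> hom_S s0 s1 ` fib_lang"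
proof -
  assume a: "i < j" "G s0 s1 j = G s0 s1 i + n"
  have "map c_alpha [i..<j] \<in> fib_lang" unfolding fib_lang_def
    using a(1) by (intro CollectI exI[of _ i] exI[of _ "j - i"]) auto
  moreover have "hom_S s0 s1 (map c_alpha [i..<j]) = n" using window[of i j s0 s1] a by auto
  ultimately show ?thesis by force
qed

lemma Gge: "s0 \<ge> 1 \<Longrightarrow> s1 \<ge> 1 \<Longrightarrow> G s0 s1 t \<ge> t"
  by (induction t) (auto simp: G0 GSuc)

lemma nonempty_ge: "s0 \<ge> 1 \<Longrightarrow> s1 \<ge> 1 \<Longrightarrow> xs \<noteq> [] \<Longrightarrow> hom_S s0 s1 xs \<ge> 1"
  by (cases xs) (auto simp: hom_S_def)

theorem lemma5:
  fixes s0 s1 :: nat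
  assumes "s0 \<ge> 1" and "s1 \<ge> 1"
    and "(s0 = 1 \<and> s1 \<le> 3) \<or> (s0 = 2 \<and> s1 = 1)"
  shows "hom_S s0 s1 ` fib_lang = {n. n \<ge> 1}"
proof
  show "hom_S s0 s1 ` fib_lang \<subseteq> {n. n \<ge> 1}"
    unfolding fib_lang_def using nonempty_ge[OF assms(1,2)] by auto
next
  show "{n. n \<ge> 1} \<subseteq> hom_S s0 s1 ` fib_lang"
  proof
    fix n :: nat assume "n \<in> {n. n \<ge> 1}"
    then have n1: "n \<ge> 1" by simp
    let ?G = "G s0 s1"
    have ex: "\<exists>t. n \<le> ?G t" using Gge[OF assms(1,2), of n] by blast
    define k where "k = (LEAST t. n \<le> ?G t)"
    have k1: "n \<le> ?G k" unfolding k_def using LeastI_ex[OF ex] .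
    have "k \<noteq> 0" using k1 n1 G0[of s0 s1] by (cases k) auto
    then obtain j where kj: "k = Suc j" by (cases k) auto
    have j1: "?G j < n" using not_less_Least[of j "\<lambda>t. n \<le> ?G t"] kj k_def by auto
    have j2: "n \<le> ?G (Suc j)" using k1 kj by simp
    show "n \<in> hom_S s0 s1 ` fib_lang"
    proof (cases "?G (Suc j) = n")
      case True then show ?thesis using mem[of 0 "Suc j" s0 s1 n] G0[of s0 s1] by auto
    next
      case False
      then have gt: "n < ?G (Suc j)" using j2 by auto
      note gs = GSuc[of s0 s1]
      have G1: "?G 1 = s0" using gs[of 0] G0[of s0 s1] cvals by simp
      have G2: "?G 2 = s0 + s1" using gs[of 1] G1 cvals by (simp add: numeral_eq_Suc)
      have G4: "?G 4 = 3 * s0 + s1" using gs[of 3] gs[of 2] G2 cvals by (simp add: numeral_eq_Suc)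
      consider "s0 = 1" "s1 = 1" | "s0 = 1" "s1 = 2" | "s0 = 1" "s1 = 3" | "s0 = 2" "s1 = 1"
        using assms by linarith
      then show ?thesis
      proof cases
        case 1 then show ?thesis using gt j1 gs[of j] by auto
      next
        case 2
        then have cj: "c_alpha j = 1" using gt j1 gs[of j] c01[of j] by auto
        then have "j \<noteq> 0" using cvals by (cases j) auto
        then show ?thesis using mem[of 1 "Suc j" s0 s1 n] G1 gt j1 gs[of j] cj 2 by auto
      next
        case 3
        then have cj: "c_alpha j = 1" using gt j1 gs[of j] c01[of j] by auto
        then have j0: "j \<noteq> 0" using cvals by (cases j) auto
        have e: "?G (Suc j) = ?G j + 3" using gs[of j] cj 3 by simp
        consider "n = ?G j + 2" | "n = ?G j + 1" using e gt j1 by linarith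
        then show ?thesis
        proof cases
          case 1 then show ?thesis using mem[of 1 "Suc j" s0 s1 n] G1 e j0 3 by auto
        next
          case n: 2
          have e2: "?G (Suc (Suc j)) = n + 3" using gs[of "Suc j"] no11[OF cj] e n 3 by simp
          consider "c_alpha (Suc (Suc j)) = 0" | "c_alpha (Suc (Suc j)) = 1" using c01 by blast
          then show ?thesis
          proof cases
            case 1
            then have "?G (Suc (Suc (Suc j))) = ?G 2 + n" using gs[of "Suc (Suc j)"] e2 G2 3 by simp
            then show ?thesis using mem[of 2 "Suc (Suc (Suc j))"] by auto
          next
            case c: 2
            then have "j \<noteq> 1" using cvals by (auto simp: numeral_eq_Suc)
            then have jj: "j \<ge> 2" using j0 by auto
            have "?G (Suc (Suc (Suc j))) = ?G 4 + n" using gs[of "Suc (Suc j)"] e2 G4 3 c by simp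
            then show ?thesis using mem[of 4 "Suc (Suc (Suc j))"] jj by auto
          qed
        qed
      next
        case 4
        then have cj: "c_alpha j = 0" using gt j1 gs[of j] c01[of j] by auto
        have e: "?G (Suc j) = n + 1" using gs[of j] cj 4 gt j1 by simp
        consider "c_alpha (Suc j) = 0" | "c_alpha (Suc j) = 1" using c01 by blast
        then show ?thesis
        proof cases
          case c: 1
          then have "j \<noteq> 0" using cvals by (cases j) auto
          moreover have "?G (Suc (Suc j)) = ?G 2 + n" using gs[of "Suc j"] e G2 4 c by simp
          ultimately show ?thesis using mem[of 2 "Suc (Suc j)"] by auto
        next
          case c: 2
          have "?G (Suc (Suc j)) = ?G 1 + n" using gs[of "Suc j"] e G1 4 c by simp
          then show ?thesis using mem[of 1 "Suc (Suc j)"] by auto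
        qed
      qed
    qed
  qed
qed

end
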